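(* There is $n_0$ such that the following holds for every $n\ge n_0$. Let $t\ge1$, let $F$ be an $n$-vertex graph, and suppose there is a partition $V(F)=U\cup V$ with $|U|=\lfloor n/2\rfloor$ and $\left|e_F(U,V)-\frac{e(F)}{2}\right|\ge t$. Let $\gamma\in(0,1)$, let $G$ be a subgraph of $K_n$ (on the vertex set of $K_n$), and suppose there is a partition $V(G)=X\cup Y$ with $|X|=\lfloor n/2\rfloor$ and $\left|e_G(X,Y)-\frac12|X||Y|\right|\ge\gamma n^2$. Suppose that $\gamma t\ge\frac{10e(F)}{n}$. Then there is a copy $F_0$ of $F$ in $K_n$ with $\left||E(F_0)\cap E(G)|-\frac{e(F)}{2}\right|\ge0.5\gamma t$.
   Context: $e_F(U,V)$ denotes the number of edges of $F$ with one endpoint in $U$ and the other in $V$; $e(F)=|E(F)|$. A copy of $F$ in $K_n$ is a subgraph of $K_n$ isomorphic to $F$. *)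

theory Defs
  imports Complex_Main
begin

definition graph_on :: "'a set \<Rightarrow> 'a set set \<Rightarrow> bool" where
  "graph_on V E \<longleftrightarrow> finite V \<and> E \<subseteq> {e. e \<subseteq> V \<and> card e = 2}"

definition e_cross :: "'a set set \<Rightarrow> 'a set \<Rightarrow> 'a set \<Rightarrow> nat" where
  "e_cross E U W = card {e \<in> E. \<exists>u\<in>U. \<exists>w\<in>W. e = {u, w}}"

text \<open>F0 (an edge set on {0..<n}) is a copy of the graph (VF, EF) in K_n:
  the image of F under an injective vertex map into V(K_n) = {0..<n}.\<close>
definition is_copy_in_Kn :: "nat \<Rightarrow> 'a set \<Rightarrow> 'a set set \<Rightarrow> nat set set \<Rightarrow> bool" where
  "is_copy_in_Kn n VF EF F0 \<longleftrightarrow>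
     (\<exists>\<phi>. inj_on \<phi> VF \<and> \<phi> ` VF \<subseteq> {0..<n} \<and> F0 = (\<lambda>e. \<phi> ` e) ` EF)"

end

theory Submission
  imports Defs "HOL-Combinatorics.Permutations"
begin


definition Hgrp :: "'a set \<Rightarrow> 'a set \<Rightarrow> 'a set \<Rightarrow> ('a \<Rightarrow> 'a) set" where
  "Hgrp S A B = {\<pi>. \<pi> permutes S \<and> \<pi> ` A = A \<and> \<pi> ` B = B}"
definition T2 :: "'a set \<Rightarrow> 'a set set" where
  "T2 D = {f. f \<subseteq> D \<and> card f = 2}"
definition TX :: "'a set \<Rightarrow> 'a set \<Rightarrow> 'a set set" where
  "TX A B = {f. \<exists>a\<in>A. \<exists>b\<in>B. f = {a,b}}"

lemma orbit_count:
  assumes finP: "finite P"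
    and rm: "\<And>\<tau>. \<tau> \<in> P \<Longrightarrow> bij_betw (\<lambda>\<pi>. \<pi> \<circ> \<tau>) P P"
    and finT: "finite T"
    and act: "\<And>\<pi>. \<pi> \<in> P \<Longrightarrow> bij_betw (image \<pi>) T T"
    and tr: "\<And>f f'. f \<in> T \<Longrightarrow> f' \<in> T \<Longrightarrow> \<exists>\<tau>\<in>P. \<tau> ` f = f'"
    and f: "f \<in> T"
  shows "card T * card {\<pi>\<in>P. \<pi> ` f \<in> G} = card P * card (G \<inter> T)"
proof -
  define N where "N f = card {\<pi>\<in>P. \<pi> ` f \<in> G}" for f
  have Nc: "N f' = N f" if f'T: "f' \<in> T" for f'
  proof -
    obtain \<tau> where \<tau>: "\<tau> \<in> P" "\<tau> ` f = f'" using tr[OF f f'T] by blast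
    have "bij_betw (\<lambda>\<pi>. \<pi> \<circ> \<tau>) {\<pi>\<in>P. \<pi> ` f' \<in> G} {\<sigma>\<in>P. \<sigma> ` f \<in> G}"
    proof -
      have b: "bij_betw (\<lambda>\<pi>. \<pi> \<circ> \<tau>) P P" using rm[OF \<tau>(1)] .
      have "(\<lambda>\<pi>. \<pi> \<circ> \<tau>) ` {\<pi>\<in>P. \<pi> ` f' \<in> G} = {\<sigma>\<in>P. \<sigma> ` f \<in> G}"
      proof (intro equalityI subsetI)
        fix x assume "x \<in> (\<lambda>\<pi>. \<pi> \<circ> \<tau>) ` {\<pi>\<in>P. \<pi> ` f' \<in> G}"
        then obtain \<pi> where "\<pi> \<in> P" "\<pi> ` f' \<in> G" "x = \<pi> \<circ> \<tau>" by blast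
        thus "x \<in> {\<sigma>\<in>P. \<sigma> ` f \<in> G}" using b \<tau> by (auto simp: bij_betw_def image_image)
      next
        fix x assume x: "x \<in> {\<sigma>\<in>P. \<sigma> ` f \<in> G}"
        then obtain \<pi> where "\<pi> \<in> P" "x = \<pi> \<circ> \<tau>" using b unfolding bij_betw_def by force
        thus "x \<in> (\<lambda>\<pi>. \<pi> \<circ> \<tau>) ` {\<pi>\<in>P. \<pi> ` f' \<in> G}" using x \<tau> by (auto simp: image_image)
      qed
      moreover have "inj_on (\<lambda>\<pi>. \<pi> \<circ> \<tau>) {\<pi>\<in>P. \<pi> ` f' \<in> G}"
        using b unfolding bij_betw_def by (rule inj_on_subset[OF conjunct1]) auto
      ultimately show ?thesis unfolding bij_betw_def by simp
    qed
    thus ?thesis unfolding N_def by (rule bij_betw_same_card)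
  qed
  have "(\<Sum>f'\<in>T. N f') = (\<Sum>f'\<in>T. \<Sum>\<pi>\<in>P. if \<pi> ` f' \<in> G then 1 else 0)"
    unfolding N_def using finP by (simp add: sum.inter_filter[symmetric])
  also have "\<dots> = (\<Sum>\<pi>\<in>P. \<Sum>f'\<in>T. if \<pi> ` f' \<in> G then 1 else 0)" by (rule sum.swap)
  also have "\<dots> = (\<Sum>\<pi>\<in>P. card (G \<inter> T))"
  proof (rule sum.cong[OF refl])
    fix \<pi> assume \<pi>: "\<pi> \<in> P"
    have "(\<Sum>f'\<in>T. if \<pi> ` f' \<in> G then 1 else 0) = card {f'\<in>T. \<pi> ` f' \<in> G}"
      using finT by (simp add: sum.inter_filter[symmetric])
    also have "\<dots> = card (G \<inter> T)"
    proof (rule bij_betw_same_card[of "image \<pi>"])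
      have b: "bij_betw (image \<pi>) T T" using act[OF \<pi>] .
      show "bij_betw (image \<pi>) {f' \<in> T. \<pi> ` f' \<in> G} (G \<inter> T)"
        unfolding bij_betw_def
      proof
        show "inj_on ((`) \<pi>) {f' \<in> T. \<pi> ` f' \<in> G}" using b unfolding bij_betw_def by (auto intro: inj_on_subset)
        show "(`) \<pi> ` {f' \<in> T. \<pi> ` f' \<in> G} = G \<inter> T"
        proof (intro equalityI subsetI)
          fix x assume "x \<in> (`) \<pi> ` {f' \<in> T. \<pi> ` f' \<in> G}"
          thus "x \<in> G \<inter> T" using b unfolding bij_betw_def by auto
        next
          fix x assume x: "x \<in> G \<inter> T"
          then obtain y where "y \<in> T" "x = \<pi> ` y" using b unfolding bij_betw_def by (metis IntD2 imageE)
          thus "x \<in> (`) \<pi> ` {f' \<in> T. \<pi> ` f' \<in> G}" using x by auto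
        qed
      qed
    qed
    finally show "(\<Sum>f'\<in>T. if \<pi> ` f' \<in> G then 1 else 0) = card (G \<inter> T)" .
  qed
  also have "\<dots> = card P * card (G \<inter> T)" by simp
  finally have "(\<Sum>f'\<in>T. N f') = card P * card (G \<inter> T)" .
  moreover have "(\<Sum>f'\<in>T. N f') = card T * N f" using Nc by simp
  ultimately show ?thesis unfolding N_def by simp
qed

lemma Hgrp_finite: "finite S \<Longrightarrow> finite (Hgrp S A B)"
  unfolding Hgrp_def by (rule finite_subset[OF _ finite_permutations[of S]]) auto

lemma Hgrp_id: "id \<in> Hgrp S A B"
  unfolding Hgrp_def by (auto intro: permutes_id)

lemma Hgrp_comp: "p \<in> Hgrp S A B \<Longrightarrow> q \<in> Hgrp S A B \<Longrightarrow> p \<circ> q \<in> Hgrp S A B"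
  unfolding Hgrp_def by (simp add: permutes_compose image_comp[symmetric] image_image[symmetric])

lemma Hgrp_inv: assumes "p \<in> Hgrp S A B" shows "inv p \<in> Hgrp S A B"
proof -
  have p: "p permutes S" "p ` A = A" "p ` B = B" using assms unfolding Hgrp_def by auto
  have i: "inj p" using permutes_inj[OF p(1)] .
  have "inv p ` A = A" by (metis i image_inv_f_f p(2))
  moreover have "inv p ` B = B" by (metis i image_inv_f_f p(3))
  ultimately show ?thesis unfolding Hgrp_def using permutes_inv[OF p(1)] by auto
qed

lemma Hgrp_rm: assumes t: "\<tau> \<in> Hgrp S A B" shows "bij_betw (\<lambda>\<pi>. \<pi> \<circ> \<tau>) (Hgrp S A B) (Hgrp S A B)"
proof -
  have tp: "\<tau> permutes S" using t unfolding Hgrp_def by auto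
  have io: "\<tau> \<circ> inv \<tau> = id" "inv \<tau> \<circ> \<tau> = id" using permutes_inv_o[OF tp] by auto
  show ?thesis unfolding bij_betw_def
  proof
    show "inj_on (\<lambda>\<pi>. \<pi> \<circ> \<tau>) (Hgrp S A B)"
    proof (rule inj_onI)
      fix x y assume "x \<circ> \<tau> = y \<circ> \<tau>"
      hence "x \<circ> \<tau> \<circ> inv \<tau> = y \<circ> \<tau> \<circ> inv \<tau>" by simp
      thus "x = y" by (simp add: o_assoc[symmetric] io)
    qed
    show "(\<lambda>\<pi>. \<pi> \<circ> \<tau>) ` Hgrp S A B = Hgrp S A B"
    proof (intro equalityI subsetI)
      fix x assume "x \<in> (\<lambda>\<pi>. \<pi> \<circ> \<tau>) ` Hgrp S A B"
      thus "x \<in> Hgrp S A B" using Hgrp_comp t by auto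
    next
      fix x assume x: "x \<in> Hgrp S A B"
      have "x = (x \<circ> inv \<tau>) \<circ> \<tau>" by (simp add: o_assoc[symmetric] io)
      moreover have "x \<circ> inv \<tau> \<in> Hgrp S A B" using Hgrp_comp[OF x Hgrp_inv[OF t]] .
      ultimately show "x \<in> (\<lambda>\<pi>. \<pi> \<circ> \<tau>) ` Hgrp S A B" by blast
    qed
  qed
qed

lemma Hgrp_inj: "p \<in> Hgrp S A B \<Longrightarrow> inj p"
  unfolding Hgrp_def using permutes_inj by auto

lemma Hgrp_transp:
  assumes "A \<subseteq> S" "B \<subseteq> S" "A \<inter> B = {}" "x \<in> A" "y \<in> A"
  shows "transpose x y \<in> Hgrp S A B"
proof -
  have "x \<notin> B" "y \<notin> B" using assms by auto
  thus ?thesis unfolding Hgrp_def using assms by (auto intro: permutes_swap_id)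
qed

lemma Hgrp_sym: "Hgrp S A B = Hgrp S B A"
  unfolding Hgrp_def by auto

lemma finite_T2: "finite D \<Longrightarrow> finite (T2 D)"
  unfolding T2_def by (rule finite_subset[of _ "Pow D"]) auto

lemma card_T2: "finite D \<Longrightarrow> card (T2 D) = card D choose 2"
  unfolding T2_def by (rule n_subsets)

lemma TX_eq: "TX A B = (\<lambda>(a,b). {a,b}) ` (A \<times> B)"
  unfolding TX_def by auto

lemma TX_sym: "TX A B = TX B A"
  unfolding TX_def by (auto simp: insert_commute)

lemma finite_TX: "finite A \<Longrightarrow> finite B \<Longrightarrow> finite (TX A B)"
  unfolding TX_eq by auto

lemma card_TX: assumes "finite A" "finite B" "A \<inter> B = {}" shows "card (TX A B) = card A * card B"
proof -
  have "inj_on (\<lambda>(a,b). {a,b}) (A \<times> B)"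
    using assms(3) by (auto simp: inj_on_def doubleton_eq_iff)
  thus ?thesis unfolding TX_eq by (simp add: card_image card_cartesian_product)
qed

lemma act_T2: assumes "p permutes S" "p ` D = D" "finite D"
  shows "bij_betw (image p) (T2 D) (T2 D)"
proof -
  have i: "inj p" using permutes_inj[OF assms(1)] .
  have ii: "inj_on (image p) (T2 D)" using i by (meson inj_image_eq_iff inj_onI)
  have sub: "image p ` T2 D \<subseteq> T2 D"
  proof
    fix x assume "x \<in> image p ` T2 D"
    then obtain f where f: "f \<in> T2 D" "x = p ` f" by blast
    have "card (p ` f) = card f" using i by (simp add: card_image inj_on_subset)
    thus "x \<in> T2 D" using f assms(2) unfolding T2_def by auto
  qed
  have "image p ` T2 D = T2 D" using endo_inj_surj[OF finite_T2[OF assms(3)] sub ii] .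
  thus ?thesis using ii unfolding bij_betw_def by simp
qed

lemma act_TX: assumes "p permutes S" "p ` A = A" "p ` B = B" "finite A" "finite B"
  shows "bij_betw (image p) (TX A B) (TX A B)"
proof -
  have i: "inj p" using permutes_inj[OF assms(1)] .
  have ii: "inj_on (image p) (TX A B)" using i by (meson inj_image_eq_iff inj_onI)
  have sub: "image p ` TX A B \<subseteq> TX A B"
  proof
    fix x assume "x \<in> image p ` TX A B"
    then obtain a b where "a \<in> A" "b \<in> B" "x = p ` {a,b}" unfolding TX_def by blast
    moreover have "p a \<in> A" "p b \<in> B" using assms(2,3) \<open>a \<in> A\<close> \<open>b \<in> B\<close> by auto
    ultimately show "x \<in> TX A B" unfolding TX_def by auto
  qed
  have "image p ` TX A B = TX A B" using endo_inj_surj[OF finite_TX[OF assms(4,5)] sub ii] .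
  thus ?thesis using ii unfolding bij_betw_def by simp
qed

lemma trans_T2:
  assumes tp: "\<And>x y. x \<in> D \<Longrightarrow> y \<in> D \<Longrightarrow> transpose x y \<in> P"
    and cp: "\<And>p q. p \<in> P \<Longrightarrow> q \<in> P \<Longrightarrow> p \<circ> q \<in> P"
    and f: "f \<in> T2 D" and f': "f' \<in> T2 D"
  shows "\<exists>\<tau>\<in>P. \<tau> ` f = f'"
proof -
  obtain a1 a2 where a: "f = {a1,a2}" "a1 \<noteq> a2" using f unfolding T2_def by (auto simp: card_2_iff)
  obtain b1 b2 where b: "f' = {b1,b2}" "b1 \<noteq> b2" using f' unfolding T2_def by (auto simp: card_2_iff)
  have inD: "a1 \<in> D" "a2 \<in> D" "b1 \<in> D" "b2 \<in> D" using a b f f' unfolding T2_def by auto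
  define c where "c = transpose a1 b1 a2"
  have cD: "c \<in> D" unfolding c_def using inD by (auto simp: transpose_def)
  have cb1: "c \<noteq> b1" unfolding c_def using a(2) by (auto simp: transpose_def)
  define \<tau> where "\<tau> = transpose c b2 \<circ> transpose a1 b1"
  have "\<tau> \<in> P" unfolding \<tau>_def using tp cp cD inD by auto
  moreover have "\<tau> a1 = b1" unfolding \<tau>_def using cb1 b(2) by simp
  moreover have "\<tau> a2 = b2" unfolding \<tau>_def c_def by simp
  ultimately show ?thesis using a b by (intro bexI[of _ \<tau>]) auto
qed

lemma trans_TX:
  assumes tpA: "\<And>x y. x \<in> A \<Longrightarrow> y \<in> A \<Longrightarrow> transpose x y \<in> P"
    and tpB: "\<And>x y. x \<in> B \<Longrightarrow> y \<in> B \<Longrightarrow> transpose x y \<in> P"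
    and cp: "\<And>p q. p \<in> P \<Longrightarrow> q \<in> P \<Longrightarrow> p \<circ> q \<in> P"
    and disj: "A \<inter> B = {}"
    and f: "f \<in> TX A B" and f': "f' \<in> TX A B"
  shows "\<exists>\<tau>\<in>P. \<tau> ` f = f'"
proof -
  obtain a b where ab: "a \<in> A" "b \<in> B" "f = {a,b}" using f unfolding TX_def by auto
  obtain a' b' where ab': "a' \<in> A" "b' \<in> B" "f' = {a',b'}" using f' unfolding TX_def by auto
  define \<tau> where "\<tau> = transpose a a' \<circ> transpose b b'"
  have "\<tau> \<in> P" unfolding \<tau>_def using tpA tpB cp ab ab' by auto
  moreover have "\<tau> a = a'" unfolding \<tau>_def using ab ab' disj
    by (auto simp: transpose_def)
  moreover have "\<tau> b = b'" unfolding \<tau>_def using ab ab' disj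
    by (auto simp: transpose_def)
  ultimately show ?thesis using ab ab' by (intro bexI[of _ \<tau>]) auto
qed



lemma aux_K: "(K::real) \<noteq> 0 \<Longrightarrow> \<alpha>*gA/(K/2) + \<beta>*gB/(K/2) + \<alpha>*gB/(K/2) + \<beta>*gA/(K/2) = 2*(\<alpha>+\<beta>)*((gA+gB)/K)"
  by (simp add: field_simps)

lemma helper_sum: "x1+x2+x3+x4 = (S::real) \<Longrightarrow> y = Y \<Longrightarrow> ((x1+x2+y+JB)+(x3+x4+y+JC))/2 - e/2 = (S + 2*Y + JB + JC)/2 - e/2"
  by simp

lemma helper_abs: "\<bar>X + (JB + JC)/2 - jF/2\<bar> < (T::real) \<Longrightarrow> 0 \<le> JB \<Longrightarrow> JB \<le> jF \<Longrightarrow> 0 \<le> JC \<Longrightarrow> JC \<le> jF \<Longrightarrow> \<bar>X\<bar> < T + jF/2"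
  unfolding abs_less_iff by argo

lemma helper_tri: "\<bar>A + B\<bar> < (C::real) \<Longrightarrow> \<bar>B\<bar> \<le> D \<Longrightarrow> \<bar>A\<bar> = E \<Longrightarrow> E < C + D"
  by argo

lemma helper_R: "X \<le> A + B + C \<Longrightarrow> A \<le> K/16 \<Longrightarrow> B \<le> K/40 \<Longrightarrow> C \<le> K/8 + K/20 \<Longrightarrow> X \<le> (21/80)*(K::real)"
  by linarith

lemma helper_fin: "X < (21/80)*K \<Longrightarrow> X = (18/25)*K \<Longrightarrow> (K::real) > 0 \<Longrightarrow> False"
  by linarith

lemma arith_core:
  fixes n m e t g \<alpha> \<beta> a jF a0 gA gB gAB jG gXY eG JB JC :: real
  assumes nbig: "n \<ge> 1000" and nm: "n = 2*m \<or> n = 2*m+1"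
    and eGdef: "eG = gA+gB+gAB+jG" and jG0: "0 \<le> jG" and jGn: "jG \<le> n"
    and gXY1: "gAB \<le> gXY" and gXY2: "gXY \<le> gAB + jG" and gXY3: "0 \<le> gXY" and gXY4: "gXY \<le> m*(n-m)"
    and gdev: "\<bar>gXY - m*(n-m)/2\<bar> \<ge> g*n^2"
    and edef: "e = \<alpha>+\<beta>+a+jF" and ge0: "\<alpha> \<ge> 0" "\<beta> \<ge> 0" "a \<ge> 0" "jF \<ge> 0"
    and jFm: "jF*m \<le> 2*e"
    and a0dev: "\<bar>a0 - e/2\<bar> \<ge> t" and a0a: "a \<le> a0" "a0 \<le> a+jF"
    and t1: "t \<ge> 1" and g0: "0 < g" and g1: "g < 1" and gt: "g*t \<ge> 10*e/n"
    and hA: "\<bar>e*eG/(n*(n-1)/2) - e/2\<bar> < g*t/2"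
    and JB: "0 \<le> JB" "JB \<le> jF" and JC: "0 \<le> JC" "JC \<le> jF"
    and hBC: "\<bar>((\<alpha>*gA/(m*(m-1)/2) + \<beta>*gB/(m*(m-1)/2) + a*gAB/m^2 + JB)
              + (\<alpha>*gB/(m*(m-1)/2) + \<beta>*gA/(m*(m-1)/2) + a*gAB/m^2 + JC))/2 - e/2\<bar> < g*t/2"
  shows False
proof -
  have m499: "m \<ge> 499" using nbig nm by auto
  have npos: "n > 0" using nbig by auto
  have mm1: "m*(m-1) > 0" using m499 by auto
  have m2: "m^2 > 0" using m499 by auto
  have a0e: "0 \<le> a0" "a0 \<le> e" using a0a edef ge0 by auto
  have te: "t \<le> e/2" using a0dev a0e by (auto simp: abs_if split: if_splits)
  have epos: "e > 0" using te t1 by auto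
  have ge20: "g*n \<ge> 20"
  proof -
    have "g*e/2 \<ge> g*t" using te g0 by (simp add: mult_left_mono)
    hence "g*e/2 \<ge> 10*e/n" using gt by linarith
    hence "g*e/2*n \<ge> 10*e" using npos by (simp add: divide_le_eq)
    hence "e*(g*n) \<ge> e*20" by (simp add: algebra_simps)
    thus ?thesis using epos by simp
  qed
  have g8: "g \<le> 1/8"
  proof -
    have "\<bar>gXY - m*(n-m)/2\<bar> \<le> m*(n-m)/2" using gXY3 gXY4 by (auto simp: abs_if)
    also have "m*(n-m) \<le> n^2/4"
    proof -
      have "0 \<le> (n-2*m)^2" by simp
      thus ?thesis by (simp add: power2_eq_square algebra_simps)
    qed
    finally have "g*n^2 \<le> n^2/8" using gdev by linarith
    thus ?thesis using npos by (simp add: field_simps)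
  qed
  have eb: "e \<le> g*t*n/10" using gt npos by (simp add: field_simps)
  define N where "N = n*(n-1)/2"
  have Npos: "N > 0" using nbig unfolding N_def by auto
  have Nle: "N \<le> n^2/2" unfolding N_def using npos by (simp add: power2_eq_square field_simps)
  define \<delta> where "\<delta> = gAB/m^2 - 1/2"
  define \<sigma> where "\<sigma> = (gA+gB)/(m*(m-1)) - 1/2"
  define \<epsilon> where "\<epsilon> = eG/N - 1/2"
  define c0 where "c0 = N/2 - m*(m-1)/2 - m^2/2 - jG"
  have c0b: "\<bar>c0\<bar> \<le> n" using nm jG0 jGn m499 unfolding c0_def N_def
    by (auto simp: power2_eq_square field_simps abs_if)
  have ident: "m*(m-1)*\<sigma> + m^2*\<delta> = N*\<epsilon> + c0"
  proof -
    have 1: "m*(m-1)*\<sigma> = gA+gB - m*(m-1)/2" 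
    proof -
      have "m*(m-1)*\<sigma> = m*(m-1)*((gA+gB)/(m*(m-1))) - m*(m-1)/2" unfolding \<sigma>_def by (simp add: right_diff_distrib)
      also have "m*(m-1)*((gA+gB)/(m*(m-1))) = gA+gB" using mm1 by (metis less_irrefl times_divide_eq_right nonzero_mult_div_cancel_left)
      finally show ?thesis .
    qed
    have 2: "m^2*\<delta> = gAB - m^2/2" unfolding \<delta>_def using m2 by (simp add: field_simps)
    have 3: "N*\<epsilon> = eG - N/2" unfolding \<epsilon>_def using Npos by (simp add: field_simps)
    show ?thesis unfolding 1 2 3 c0_def eGdef by simp
  qed
  have idS: "m*(m-1)*\<sigma> = N*\<epsilon> + c0 - m^2*\<delta>" using ident by linarith
  have eeps: "e*\<bar>\<epsilon>\<bar> < g*t/2"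
  proof -
    have "e*eG/(n*(n-1)/2) - e/2 = e*\<epsilon>" unfolding \<epsilon>_def N_def by (simp add: field_simps)
    thus ?thesis using hA epos by (simp add: abs_mult)
  qed
  have s5: "\<bar>(\<alpha>+\<beta>)*\<sigma> + a*\<delta>\<bar> < g*t/2 + jF/2"
  proof -
    have "((\<alpha>*gA/(m*(m-1)/2) + \<beta>*gB/(m*(m-1)/2) + a*gAB/m^2 + JB)
              + (\<alpha>*gB/(m*(m-1)/2) + \<beta>*gA/(m*(m-1)/2) + a*gAB/m^2 + JC))/2 - e/2
          = (\<alpha>+\<beta>)*\<sigma> + a*\<delta> + (JB+JC)/2 - jF/2"
    proof -
      have K: "\<alpha>*gA/(m*(m-1)/2) + \<beta>*gB/(m*(m-1)/2) + \<alpha>*gB/(m*(m-1)/2) + \<beta>*gA/(m*(m-1)/2)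
         = 2*(\<alpha>+\<beta>)*((gA+gB)/(m*(m-1)))" by (rule aux_K) (use mm1 in auto)
      have h1: "(gA+gB)/(m*(m-1)) = \<sigma> + 1/2" unfolding \<sigma>_def by simp
      have h2: "a*gAB/m^2 = a*(\<delta>+1/2)" unfolding \<delta>_def by simp
      have E: "((\<alpha>*gA/(m*(m-1)/2) + \<beta>*gB/(m*(m-1)/2) + a*gAB/m^2 + JB)
              + (\<alpha>*gB/(m*(m-1)/2) + \<beta>*gA/(m*(m-1)/2) + a*gAB/m^2 + JC))/2 - e/2
            = (2*(\<alpha>+\<beta>)*(\<sigma> + 1/2) + 2*(a*(\<delta>+1/2)) + JB + JC)/2 - e/2"
        by (rule helper_sum[OF K[unfolded h1] h2])
      show ?thesis unfolding E by (simp add: edef field_simps)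
    qed
    hence "\<bar>(\<alpha>+\<beta>)*\<sigma> + a*\<delta> + (JB+JC)/2 - jF/2\<bar> < g*t/2" using hBC by simp
    thus ?thesis using JB JC helper_abs by blast
  qed
  define \<Phi> where "\<Phi> = a*(m-1) - (\<alpha>+\<beta>)*m"
  have s6: "m*\<bar>\<delta>\<bar>*\<bar>\<Phi>\<bar> < m*(m-1)*(g*t/2 + jF/2) + (\<alpha>+\<beta>)*(N*\<bar>\<epsilon>\<bar> + \<bar>c0\<bar>)"
  proof -
    have "m*(m-1)*((\<alpha>+\<beta>)*\<sigma> + a*\<delta>) = m*\<delta>*\<Phi> + (\<alpha>+\<beta>)*(N*\<epsilon> + c0)"
    proof -
      have "m*(m-1)*((\<alpha>+\<beta>)*\<sigma> + a*\<delta>) = (\<alpha>+\<beta>)*(m*(m-1)*\<sigma>) + a*m*(m-1)*\<delta>" by (simp add: algebra_simps)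
      also have "\<dots> = (\<alpha>+\<beta>)*(N*\<epsilon> + c0 - m^2*\<delta>) + a*m*(m-1)*\<delta>" using idS by (simp only: idS)
      also have "\<dots> = m*\<delta>*\<Phi> + (\<alpha>+\<beta>)*(N*\<epsilon> + c0)" unfolding \<Phi>_def by (simp add: algebra_simps power2_eq_square)
      finally show ?thesis .
    qed
    hence "\<bar>m*\<delta>*\<Phi> + (\<alpha>+\<beta>)*(N*\<epsilon> + c0)\<bar> = m*(m-1)*\<bar>(\<alpha>+\<beta>)*\<sigma> + a*\<delta>\<bar>"
      using mm1 by (metis abs_mult abs_of_pos)
    also have "\<dots> < m*(m-1)*(g*t/2 + jF/2)" using s5 mm1 by (rule mult_strict_left_mono)
    finally have "\<bar>m*\<delta>*\<Phi> + (\<alpha>+\<beta>)*(N*\<epsilon> + c0)\<bar> < m*(m-1)*(g*t/2 + jF/2)" .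
    moreover have "\<bar>(\<alpha>+\<beta>)*(N*\<epsilon> + c0)\<bar> \<le> (\<alpha>+\<beta>)*(N*\<bar>\<epsilon>\<bar> + \<bar>c0\<bar>)"
    proof -
      have "\<bar>(\<alpha>+\<beta>)*(N*\<epsilon> + c0)\<bar> = (\<alpha>+\<beta>)*\<bar>N*\<epsilon> + c0\<bar>" using ge0 by (simp add: abs_mult)
      also have "\<bar>N*\<epsilon> + c0\<bar> \<le> N*\<bar>\<epsilon>\<bar> + \<bar>c0\<bar>" using Npos
        by (metis abs_mult abs_of_pos abs_triangle_ineq)
      hence "(\<alpha>+\<beta>)*\<bar>N*\<epsilon> + c0\<bar> \<le> (\<alpha>+\<beta>)*(N*\<bar>\<epsilon>\<bar> + \<bar>c0\<bar>)" using ge0 by (intro mult_left_mono) auto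
      finally show ?thesis .
    qed
    moreover have "\<bar>m*\<delta>*\<Phi>\<bar> = m*\<bar>\<delta>\<bar>*\<bar>\<Phi>\<bar>" using m499 by (simp add: abs_mult)
    ultimately show ?thesis by (metis helper_tri)
  qed
  have s7: "(\<alpha>+\<beta>)*(N*\<bar>\<epsilon>\<bar> + \<bar>c0\<bar>) \<le> N*g*t/2 + e*n"
  proof -
    have ab: "\<alpha>+\<beta> \<le> e" using edef ge0 by auto
    have "(\<alpha>+\<beta>)*(N*\<bar>\<epsilon>\<bar> + \<bar>c0\<bar>) \<le> e*(N*\<bar>\<epsilon>\<bar> + \<bar>c0\<bar>)"
      using ab Npos by (intro mult_right_mono) auto
    also have "\<dots> = N*(e*\<bar>\<epsilon>\<bar>) + e*\<bar>c0\<bar>" by (simp add: algebra_simps)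
    also have "\<dots> \<le> N*(g*t/2) + e*n" using eeps Npos c0b epos
      by (intro add_mono mult_left_mono) auto
    finally show ?thesis by simp
  qed
  have s8: "\<bar>\<Phi>\<bar> \<ge> 0.8*n*t"
  proof -
    have Phi': "\<Phi> = (2*m-1)*(a - e/2) - e/2 + jF*m" unfolding \<Phi>_def edef by (simp add: field_simps)
    have ae: "\<bar>a - e/2\<bar> \<ge> t - jF" using a0dev a0a by argo
    have "\<bar>\<Phi>\<bar> \<ge> (2*m-1)*\<bar>a - e/2\<bar> - e/2 - jF*m"
    proof -
      have "\<bar>(2*m-1)*(a - e/2)\<bar> = (2*m-1)*\<bar>a - e/2\<bar>" using m499 by (simp add: abs_mult)
      moreover have "jF*m \<ge> 0" using ge0 m499 by simp
      ultimately show ?thesis unfolding Phi' using epos by argo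
    qed
    moreover have "(2*m-1)*\<bar>a - e/2\<bar> \<ge> (2*m-1)*(t - jF)" using ae m499 by (intro mult_left_mono) auto
    moreover have "(2*m-1)*jF \<le> 2*(jF*m)" using ge0 by (simp add: algebra_simps)
    ultimately have "\<bar>\<Phi>\<bar> \<ge> (2*m-1)*t - 6.5*e" using jFm by (simp add: algebra_simps)
    moreover have "(2*m-1)*t \<ge> (n-2)*t" using nm t1 by (intro mult_right_mono) auto
    moreover have "6.5*e \<le> 0.65*g*t*n" using eb by (simp add: mult.commute mult.left_commute)
    moreover have "0.65*g*t*n \<le> 0.65*(1/8)*t*n" using g8 t1 npos by (intro mult_right_mono) auto
    ultimately have "\<bar>\<Phi>\<bar> \<ge> (n-2)*t - 0.65*(1/8)*t*n" by linarith
    moreover have "(n-2)*t - 0.65*(1/8)*t*n \<ge> 0.8*n*t" using nbig t1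
      by (simp add: algebra_simps)
    ultimately show ?thesis by linarith
  qed
  have s9: "\<bar>\<delta>\<bar>*m^2 \<ge> 0.9*g*n^2"
  proof -
    have "\<delta>*m^2 = gAB - m^2/2" unfolding \<delta>_def using m2 by (simp add: field_simps)
    moreover have "\<bar>m*(n-m)/2 - m^2/2\<bar> \<le> n" using nm m499 by (auto simp: power2_eq_square field_simps)
    ultimately have "\<bar>\<delta>*m^2\<bar> \<ge> g*n^2 - 2*n" using gdev gXY1 gXY2 jGn jG0 by argo
    moreover have "2*n \<le> 0.1*g*n^2" using ge20 npos by (simp add: power2_eq_square)
    ultimately show ?thesis using m2 by (simp add: abs_mult)
  qed
  have L: "(\<bar>\<delta>\<bar>*m^2)*\<bar>\<Phi>\<bar> \<ge> (0.9*g*n^2)*(0.8*n*t)"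
    by (rule mult_mono[OF s9 s8]) (use g0 npos t1 in auto)
  have R: "m*(m*(m-1)*(g*t/2 + jF/2) + (\<alpha>+\<beta>)*(N*\<bar>\<epsilon>\<bar> + \<bar>c0\<bar>)) \<le> (21/80)*(n^3*g*t)"
  proof -
    have mn: "m \<le> n/2" using nm by auto
    have a1: "m*(m*(m-1)*(g*t))/2 \<le> n^3*g*t/16"
    proof -
      have "m*(m*(m-1)) \<le> (n/2)*((n/2)*(n/2))" using mn m499
        by (intro mult_mono) auto
      hence "m*(m*(m-1))*(g*t) \<le> (n/2)*((n/2)*(n/2))*(g*t)" using g0 t1 by (intro mult_right_mono) auto
      thus ?thesis by (simp add: power3_eq_cube field_simps)
    qed
    have a2: "m*(m*(m-1)*jF)/2 \<le> n^3*g*t/40"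
    proof -
      have "m*(m*(m-1)*jF)/2 \<le> m*m*(jF*m)/2" using ge0 m499 by (simp add: algebra_simps mult_left_mono)
      also have "\<dots> \<le> m*m*(2*e)/2" using jFm m499 by (intro divide_right_mono mult_left_mono) auto
      also have "\<dots> \<le> (n/2)*(n/2)*e"
      proof -
        have "m*m \<le> (n/2)*(n/2)" using mn m499 by (intro mult_mono) auto
        thus ?thesis using epos by (simp add: mult_right_mono)
      qed
      also have "\<dots> \<le> (n/2)*(n/2)*(g*t*n/10)" using eb by (intro mult_left_mono) auto
      finally show ?thesis by (simp add: power3_eq_cube field_simps)
    qed
    have a3: "m*(N*g*t/2 + e*n) \<le> n^3*g*t/8 + n^3*g*t/20"
    proof -
      have "m*(N*g*t/2 + e*n) \<le> (n/2)*(N*g*t/2 + e*n)" using mn Npos g0 t1 epos npos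
        by (intro mult_right_mono) auto
      also have "\<dots> \<le> (n/2)*((n^2/2)*g*t/2 + (g*t*n/10)*n)" using Nle eb g0 t1 npos
        by (intro mult_left_mono add_mono mult_right_mono divide_right_mono) auto
      finally show ?thesis by (simp add: power3_eq_cube power2_eq_square field_simps)
    qed
    have "m*(m*(m-1)*(g*t/2 + jF/2) + (\<alpha>+\<beta>)*(N*\<bar>\<epsilon>\<bar> + \<bar>c0\<bar>)) \<le> m*(m*(m-1)*(g*t/2 + jF/2) + (N*g*t/2 + e*n))"
      using s7 m499 by (intro mult_left_mono) auto
    also have "\<dots> = m*(m*(m-1)*(g*t))/2 + m*(m*(m-1)*jF)/2 + m*(N*g*t/2 + e*n)" by (simp add: algebra_simps)
    finally show ?thesis using a1 a2 a3 by (rule helper_R)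
  qed
  have "(\<bar>\<delta>\<bar>*m^2)*\<bar>\<Phi>\<bar> = m*(m*\<bar>\<delta>\<bar>*\<bar>\<Phi>\<bar>)" by (simp add: power2_eq_square)
  also have "\<dots> < m*(m*(m-1)*(g*t/2 + jF/2) + (\<alpha>+\<beta>)*(N*\<bar>\<epsilon>\<bar> + \<bar>c0\<bar>))"
    using s6 m499 by (intro mult_strict_left_mono) auto
  finally have "(0.9*g*n^2)*(0.8*n*t) < (21/80)*(n^3*g*t)" using L R by linarith
  moreover have "(0.9*g*n^2)*(0.8*n*t) = (18/25)*(n^3*g*t)" by (simp add: power2_eq_square power3_eq_cube)
  moreover have "n^3*g*t > 0" using npos g0 t1 by simp
  ultimately show False by (metis helper_fin)
qed



lemma card_filter_sum: "finite E \<Longrightarrow> real (card {e\<in>E. Q e}) = (\<Sum>e\<in>E. if Q e then 1 else 0)"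
  by (simp add: sum.inter_filter[symmetric])
lemma sum_if_const: assumes "finite E" shows "(\<Sum>e\<in>E. if Q e then (c::real) else 0) = c * real (card {e\<in>E. Q e})"
proof -
  have "(\<Sum>e\<in>E. if Q e then c else 0) = (\<Sum>e\<in>E. c * (if Q e then 1 else 0))" by (rule sum.cong) auto
  also have "\<dots> = c * (\<Sum>e\<in>E. if Q e then 1 else 0)" by (simp only: sum_distrib_left)
  finally show ?thesis using card_filter_sum[OF assms] by simp
qed
lemma real_choose2: "real (k choose 2) = real k * (real k - 1) / 2"
proof (induction k)
  case 0 then show ?case by simp
next
  case (Suc k)
  have "(Suc k choose 2) = (k choose 1) + (k choose 2)"
    using binomial_Suc_Suc[of k 1] by (simp add: numeral_2_eq_2)
  then show ?case using Suc by (simp add: field_simps)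
qed

lemma sum_copies:
  assumes finP: "finite P" and injP: "\<And>\<pi>. \<pi> \<in> P \<Longrightarrow> inj \<pi>" and finE: "finite EF"
    and sub: "\<And>e. e \<in> EF \<Longrightarrow> e \<subseteq> VF" and inj: "inj_on \<sigma> VF"
  shows "(\<Sum>\<pi>\<in>P. card ((\<lambda>e. (\<pi> \<circ> \<sigma>) ` e) ` EF \<inter> G)) = (\<Sum>e\<in>EF. card {\<pi>\<in>P. \<pi> ` (\<sigma> ` e) \<in> G})"
proof -
  have "card ((\<lambda>e. (\<pi> \<circ> \<sigma>) ` e) ` EF \<inter> G) = (\<Sum>e\<in>EF. if \<pi> ` (\<sigma> ` e) \<in> G then 1 else 0)" if \<pi>: "\<pi> \<in> P" for \<pi>
  proof -
    have i1: "inj_on (\<pi> \<circ> \<sigma>) VF" using inj injP[OF \<pi>] by (simp add: comp_inj_on inj_on_subset)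
    have i2: "inj_on (\<lambda>e. (\<pi> \<circ> \<sigma>) ` e) EF"
      by (rule inj_on_subset[OF inj_on_image_Pow[OF i1]]) (use sub in auto)
    have "(\<lambda>e. (\<pi> \<circ> \<sigma>) ` e) ` EF \<inter> G = (\<lambda>e. (\<pi> \<circ> \<sigma>) ` e) ` {e\<in>EF. \<pi> ` (\<sigma> ` e) \<in> G}"
      by (auto simp: image_comp)
    hence "card ((\<lambda>e. (\<pi> \<circ> \<sigma>) ` e) ` EF \<inter> G) = card {e\<in>EF. \<pi> ` (\<sigma> ` e) \<in> G}"
      using i2 by (simp add: card_image inj_on_subset)
    also have "\<dots> = (\<Sum>e\<in>EF. if \<pi> ` (\<sigma> ` e) \<in> G then 1 else 0)"
      using finE by (simp add: sum.inter_filter[symmetric])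
    finally show ?thesis .
  qed
  hence "(\<Sum>\<pi>\<in>P. card ((\<lambda>e. (\<pi> \<circ> \<sigma>) ` e) ` EF \<inter> G)) = (\<Sum>\<pi>\<in>P. \<Sum>e\<in>EF. if \<pi> ` (\<sigma> ` e) \<in> G then 1 else 0)"
    by simp
  also have "\<dots> = (\<Sum>e\<in>EF. \<Sum>\<pi>\<in>P. if \<pi> ` (\<sigma> ` e) \<in> G then 1 else 0)" by (rule sum.swap)
  also have "\<dots> = (\<Sum>e\<in>EF. card {\<pi>\<in>P. \<pi> ` (\<sigma> ` e) \<in> G})"
    using finP by (simp add: sum.inter_filter[symmetric])
  finally show ?thesis .
qed

lemma orbit_H_T2:
  assumes finS: "finite S" and AS: "A \<subseteq> S" and BS: "B \<subseteq> S" and AB: "A \<inter> B = {}"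
    and f: "f \<in> T2 A"
  shows "card (T2 A) * card {\<pi>\<in>Hgrp S A B. \<pi> ` f \<in> G} = card (Hgrp S A B) * card (G \<inter> T2 A)"
proof (rule orbit_count[OF Hgrp_finite[OF finS] Hgrp_rm finite_T2 _ _ f])
  show "finite A" using finS AS finite_subset by blast
  fix \<pi> assume "\<pi> \<in> Hgrp S A B"
  thus "bij_betw ((`) \<pi>) (T2 A) (T2 A)" unfolding Hgrp_def
    using act_T2 \<open>finite A\<close> by blast
next
  fix f f' assume "f \<in> T2 A" "f' \<in> T2 A"
  thus "\<exists>\<tau>\<in>Hgrp S A B. \<tau> ` f = f'"
    by (rule trans_T2[rotated 2]) (auto intro: Hgrp_transp[OF AS BS AB] Hgrp_comp)
qed

lemma orbit_H_TX:
  assumes finS: "finite S" and AS: "A \<subseteq> S" and BS: "B \<subseteq> S" and AB: "A \<inter> B = {}"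
    and f: "f \<in> TX A B"
  shows "card (TX A B) * card {\<pi>\<in>Hgrp S A B. \<pi> ` f \<in> G} = card (Hgrp S A B) * card (G \<inter> TX A B)"
proof (rule orbit_count[OF Hgrp_finite[OF finS] Hgrp_rm finite_TX _ _ f])
  show fA: "finite A" using finS AS finite_subset by blast
  show fB: "finite B" using finS BS finite_subset by blast
  fix \<pi> assume "\<pi> \<in> Hgrp S A B"
  thus "bij_betw ((`) \<pi>) (TX A B) (TX A B)" unfolding Hgrp_def
    using act_TX fA fB by blast
next
  have BA: "B \<inter> A = {}" using AB by auto
  have tA: "\<And>x y. x\<in>A \<Longrightarrow> y\<in>A \<Longrightarrow> transpose x y \<in> Hgrp S A B" by (rule Hgrp_transp[OF AS BS AB])
  have tB: "\<And>x y. x\<in>B \<Longrightarrow> y\<in>B \<Longrightarrow> transpose x y \<in> Hgrp S A B"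
    using Hgrp_transp[OF BS AS BA] Hgrp_sym[of S B A] by auto
  fix f f' assume ff: "f \<in> TX A B" "f' \<in> TX A B"
  show "\<exists>\<tau>\<in>Hgrp S A B. \<tau> ` f = f'"
    using trans_TX[OF tA tB Hgrp_comp AB ff] .
qed

lemma T2_filter: "(\<forall>g\<in>EG. card g = 2) \<Longrightarrow> EG \<inter> T2 A = {g\<in>EG. g \<subseteq> A}"
  unfolding T2_def by auto

lemma TX_filter: "EG \<inter> TX A B = {g\<in>EG. \<exists>u\<in>A. \<exists>w\<in>B. g = {u,w}}"
  unfolding TX_def by auto

lemma helper_div:
  fixes X K N2 M :: real
  assumes "X = K*a1/N2*c1 + K*a2/N2*c2 + K*a3/M*c3 + Js" "N2 \<noteq> 0" "M \<noteq> 0" "K > 0"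
  shows "X/K = c1*a1/N2 + c2*a2/N2 + c3*a3/M + Js/K"
proof -
  have "X/K = (K*(c1*a1/N2 + c2*a2/N2 + c3*a3/M) + Js)/K" using assms(1) by (simp add: algebra_simps)
  also have "\<dots> = c1*a1/N2 + c2*a2/N2 + c3*a3/M + Js/K" using assms(4) by (simp add: add_divide_distrib)
  finally show ?thesis .
qed

lemma fam_H:
  fixes \<sigma> :: "'a \<Rightarrow> 'b"
  assumes finS: "finite S" and AS: "A \<subseteq> S" and BS: "B \<subseteq> S" and AB: "A \<inter> B = {}"
    and cA: "card A = m" and cB: "card B = m" and m2: "m \<ge> 2"
    and inj: "inj_on \<sigma> VF" and \<sigma>U: "\<sigma> ` U = A" and \<sigma>V: "\<sigma> ` V' = B"
    and VF: "VF = U \<union> V' \<union> W" and dUV: "U \<inter> V' = {}" and dUW: "U \<inter> W = {}" and dVW: "V' \<inter> W = {}"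
    and finE: "finite EF" and EF: "\<And>e. e \<in> EF \<Longrightarrow> e \<subseteq> VF \<and> card e = 2"
    and EG2: "\<forall>g\<in>EG. card g = 2"
  shows "\<exists>J. 0 \<le> J \<and> J \<le> real (card {e\<in>EF. e \<inter> W \<noteq> {}}) \<and>
     (\<Sum>\<pi>\<in>Hgrp S A B. real (card ((\<lambda>e. (\<pi> \<circ> \<sigma>) ` e) ` EF \<inter> EG))) / real (card (Hgrp S A B))
     = real (card {e\<in>EF. e \<subseteq> U}) * real (card {g\<in>EG. g \<subseteq> A}) / (real m * (real m - 1) / 2)
     + real (card {e\<in>EF. e \<subseteq> V'}) * real (card {g\<in>EG. g \<subseteq> B}) / (real m * (real m - 1) / 2)
     + real (e_cross EF U V') * real (e_cross EG A B) / (real m)^2 + J"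
proof -
  define P where "P = Hgrp S A B"
  define cnt where "cnt f = card {\<pi>\<in>P. \<pi> ` f \<in> EG}" for f
  define N2 where "N2 = real m * (real m - 1) / 2"
  define gA where "gA = real (card {g\<in>EG. g \<subseteq> A})"
  define gB where "gB = real (card {g\<in>EG. g \<subseteq> B})"
  define gX where "gX = real (e_cross EG A B)"
  have finP: "finite P" unfolding P_def using Hgrp_finite[OF finS] .
  have Pne: "card P > 0" using finP Hgrp_id[of S A B] unfolding P_def by (auto simp: card_gt_0_iff)
  have PneR: "real (card P) > 0" using Pne by simp
  have fA: "finite A" using finS AS finite_subset by blast
  have fB: "finite B" using finS BS finite_subset by blast
  have N2pos: "N2 > 0" unfolding N2_def using m2 by auto
  have cT2A: "real (card (T2 A)) = N2" unfolding N2_def using card_T2[OF fA] cA real_choose2 by simp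
  have cT2B: "real (card (T2 B)) = N2" unfolding N2_def using card_T2[OF fB] cB real_choose2 by simp
  have cTX: "real (card (TX A B)) = (real m)^2" using card_TX[OF fA fB AB] cA cB by (simp add: power2_eq_square)
  have mpos: "(real m)^2 > 0" using m2 by simp
  have inj\<pi>: "\<And>\<pi>. \<pi> \<in> P \<Longrightarrow> inj \<pi>" unfolding P_def using Hgrp_inj by blast
  have S1: "(\<Sum>\<pi>\<in>P. card ((\<lambda>e. (\<pi> \<circ> \<sigma>) ` e) ` EF \<inter> EG)) = (\<Sum>e\<in>EF. cnt (\<sigma> ` e))"
    unfolding cnt_def by (rule sum_copies[OF finP inj\<pi> finE _ inj]) (use EF in auto)
  have cntle: "cnt f \<le> card P" for f unfolding cnt_def using finP by (intro card_mono) auto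
  have pt: "real (cnt (\<sigma> ` e)) =
      (if e \<subseteq> U then real (card P) * gA / N2 else 0)
    + (if e \<subseteq> V' then real (card P) * gB / N2 else 0)
    + (if \<exists>u\<in>U. \<exists>w\<in>V'. e = {u,w} then real (card P) * gX / (real m)^2 else 0)
    + (if e \<inter> W \<noteq> {} then real (cnt (\<sigma> ` e)) else 0)" if e: "e \<in> EF" for e
  proof -
    have eV: "e \<subseteq> VF" and e2: "card e = 2" using EF[OF e] by auto
    have ce: "card (\<sigma> ` e) = 2" using e2 eV inj by (simp add: card_image inj_on_subset)
    obtain x y where xy: "e = {x,y}" "x \<noteq> y" using e2 by (auto simp: card_2_iff)
    consider (W) "e \<inter> W \<noteq> {}" | (UU) "e \<subseteq> U" | (VV) "e \<subseteq> V'" | (UV) "\<exists>u\<in>U. \<exists>w\<in>V'. e = {u,w}"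
      using eV xy VF by blast
    thus ?thesis
    proof cases
      case W
      have "\<not> e \<subseteq> U" "\<not> e \<subseteq> V'" "\<not> (\<exists>u\<in>U. \<exists>w\<in>V'. e = {u,w})"
      proof -
        obtain z where z: "z \<in> e" "z \<in> W" using W by blast
        show "\<not> e \<subseteq> U" using z dUW by blast
        show "\<not> e \<subseteq> V'" using z dVW by blast
        show "\<not> (\<exists>u\<in>U. \<exists>w\<in>V'. e = {u,w})" using z dUW dVW by blast
      qed
      thus ?thesis using W by simp
    next
      case UU
      have nots: "e \<inter> W = {}" "\<not> e \<subseteq> V'" "\<not> (\<exists>u\<in>U. \<exists>w\<in>V'. e = {u,w})"
        using UU dUV dUW dVW xy by auto
      have fT: "\<sigma> ` e \<in> T2 A" unfolding T2_def using UU \<sigma>U ce by auto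
      have o: "card (T2 A) * cnt (\<sigma> ` e) = card P * card {g\<in>EG. g \<subseteq> A}"
        using orbit_H_T2[OF finS AS BS AB fT, of EG] unfolding cnt_def P_def T2_filter[OF EG2] .
      have "real (card (T2 A)) * real (cnt (\<sigma> ` e)) = real (card P) * gA"
        unfolding gA_def of_nat_mult[symmetric] o ..
      hence "real (cnt (\<sigma> ` e)) = real (card P) * gA / N2" unfolding cT2A using N2pos by (simp add: field_simps)
      thus ?thesis using UU nots by simp
    next
      case VV
      have nots: "e \<inter> W = {}" "\<not> e \<subseteq> U" "\<not> (\<exists>u\<in>U. \<exists>w\<in>V'. e = {u,w})"
        using VV dUV dUW dVW xy by auto
      have fT: "\<sigma> ` e \<in> T2 B" unfolding T2_def using VV \<sigma>V ce by auto
      have BA: "B \<inter> A = {}" using AB by auto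
      have o: "card (T2 B) * cnt (\<sigma> ` e) = card P * card {g\<in>EG. g \<subseteq> B}"
        using orbit_H_T2[OF finS BS AS BA fT, of EG] unfolding cnt_def P_def T2_filter[OF EG2] Hgrp_sym[of S B A] .
      have "real (card (T2 B)) * real (cnt (\<sigma> ` e)) = real (card P) * gB"
        unfolding gB_def of_nat_mult[symmetric] o ..
      hence "real (cnt (\<sigma> ` e)) = real (card P) * gB / N2" unfolding cT2B using N2pos by (simp add: field_simps)
      thus ?thesis using VV nots by simp
    next
      case UV
      obtain u w where uw: "u \<in> U" "w \<in> V'" "e = {u,w}" using UV by blast
      have nots: "e \<inter> W = {}" "\<not> e \<subseteq> U" "\<not> e \<subseteq> V'"
        using uw dUV dUW dVW by auto
      have fT: "\<sigma> ` e \<in> TX A B" unfolding TX_def using UV \<sigma>U \<sigma>V by auto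
      have o: "card (TX A B) * cnt (\<sigma> ` e) = card P * e_cross EG A B"
        using orbit_H_TX[OF finS AS BS AB fT, of EG] unfolding cnt_def P_def TX_filter e_cross_def .
      have "real (card (TX A B)) * real (cnt (\<sigma> ` e)) = real (card P) * gX"
        unfolding gX_def of_nat_mult[symmetric] o ..
      hence "real (cnt (\<sigma> ` e)) = real (card P) * gX / (real m)^2" unfolding cTX using mpos by (simp add: field_simps)
      thus ?thesis using UV nots by simp
    qed
  qed
  define J where "J = (\<Sum>e\<in>EF. if e \<inter> W \<noteq> {} then real (cnt (\<sigma> ` e)) else 0) / real (card P)"
  have "(\<Sum>e\<in>EF. real (cnt (\<sigma> ` e))) =
      real (card P) * gA / N2 * real (card {e\<in>EF. e \<subseteq> U})
    + real (card P) * gB / N2 * real (card {e\<in>EF. e \<subseteq> V'})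
    + real (card P) * gX / (real m)^2 * real (e_cross EF U V')
    + (\<Sum>e\<in>EF. if e \<inter> W \<noteq> {} then real (cnt (\<sigma> ` e)) else 0)"
  proof -
    have "(\<Sum>e\<in>EF. real (cnt (\<sigma> ` e))) = (\<Sum>e\<in>EF.
      (if e \<subseteq> U then real (card P) * gA / N2 else 0)
    + (if e \<subseteq> V' then real (card P) * gB / N2 else 0)
    + (if \<exists>u\<in>U. \<exists>w\<in>V'. e = {u,w} then real (card P) * gX / (real m)^2 else 0)
    + (if e \<inter> W \<noteq> {} then real (cnt (\<sigma> ` e)) else 0))" by (rule sum.cong[OF refl pt])
    also have "\<dots> = (\<Sum>e\<in>EF. (if e \<subseteq> U then real (card P) * gA / N2 else 0))
    + (\<Sum>e\<in>EF. (if e \<subseteq> V' then real (card P) * gB / N2 else 0))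
    + (\<Sum>e\<in>EF. (if \<exists>u\<in>U. \<exists>w\<in>V'. e = {u,w} then real (card P) * gX / (real m)^2 else 0))
    + (\<Sum>e\<in>EF. (if e \<inter> W \<noteq> {} then real (cnt (\<sigma> ` e)) else 0))" by (simp only: sum.distrib)
    finally show ?thesis unfolding e_cross_def sum_if_const[OF finE] .
  qed
  hence "(\<Sum>\<pi>\<in>P. real (card ((\<lambda>e. (\<pi> \<circ> \<sigma>) ` e) ` EF \<inter> EG))) / real (card P)
     = real (card {e\<in>EF. e \<subseteq> U}) * gA / N2 + real (card {e\<in>EF. e \<subseteq> V'}) * gB / N2
     + real (e_cross EF U V') * gX / (real m)^2 + J"
  proof -
    have "(\<Sum>\<pi>\<in>P. real (card ((\<lambda>e. (\<pi> \<circ> \<sigma>) ` e) ` EF \<inter> EG))) = real (\<Sum>\<pi>\<in>P. card ((\<lambda>e. (\<pi> \<circ> \<sigma>) ` e) ` EF \<inter> EG))"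
      by (simp only: of_nat_sum)
    also have "\<dots> = (\<Sum>e\<in>EF. real (cnt (\<sigma> ` e)))" unfolding S1 by (simp only: of_nat_sum)
    finally have X: "(\<Sum>\<pi>\<in>P. real (card ((\<lambda>e. (\<pi> \<circ> \<sigma>) ` e) ` EF \<inter> EG))) = (\<Sum>e\<in>EF. real (cnt (\<sigma> ` e)))" .
    show ?thesis unfolding X J_def by (rule helper_div[OF _ N2pos[THEN less_imp_neq, symmetric] mpos[THEN less_imp_neq, symmetric] PneR]) fact
  qed
  moreover have "0 \<le> J" unfolding J_def by (intro divide_nonneg_nonneg sum_nonneg) auto
  moreover have "J \<le> real (card {e\<in>EF. e \<inter> W \<noteq> {}})"
  proof -
    have "(\<Sum>e\<in>EF. if e \<inter> W \<noteq> {} then real (cnt (\<sigma> ` e)) else 0) \<le> (\<Sum>e\<in>EF. if e \<inter> W \<noteq> {} then real (card P) else 0)"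
      using cntle by (intro sum_mono) auto
    also have "\<dots> = real (card P) * real (card {e\<in>EF. e \<inter> W \<noteq> {}})" using sum_if_const[OF finE] .
    finally show ?thesis unfolding J_def using Pne by (simp add: divide_le_eq mult.commute)
  qed
  ultimately have fin: "0 \<le> J \<and> J \<le> real (card {e\<in>EF. e \<inter> W \<noteq> {}}) \<and> (\<Sum>\<pi>\<in>P. real (card ((\<lambda>e. (\<pi> \<circ> \<sigma>) ` e) ` EF \<inter> EG))) / real (card P)
     = real (card {e\<in>EF. e \<subseteq> U}) * gA / N2 + real (card {e\<in>EF. e \<subseteq> V'}) * gB / N2
     + real (e_cross EF U V') * gX / (real m)^2 + J" by (intro conjI)
  show ?thesis unfolding P_def[symmetric] N2_def[symmetric] gA_def[symmetric] gB_def[symmetric] gX_def[symmetric]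
    using fin by (rule exI)
qed



lemma part_count:
  assumes finE: "finite E" and E: "\<And>e. e \<in> E \<Longrightarrow> e \<subseteq> P1 \<union> P2 \<union> P3 \<and> card e = 2"
    and d12: "P1 \<inter> P2 = {}" and d13: "P1 \<inter> P3 = {}" and d23: "P2 \<inter> P3 = {}"
  shows "card E = card {e\<in>E. e \<subseteq> P1} + card {e\<in>E. e \<subseteq> P2} + e_cross E P1 P2 + card {e\<in>E. e \<inter> P3 \<noteq> {}}"
proof -
  have pt: "(1::real) = (if e \<subseteq> P1 then 1 else 0) + (if e \<subseteq> P2 then 1 else 0)
     + (if \<exists>u\<in>P1. \<exists>w\<in>P2. e = {u,w} then 1 else 0) + (if e \<inter> P3 \<noteq> {} then 1 else 0)" if e: "e \<in> E" for e
  proof -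
    obtain x y where xy: "e = {x,y}" "x \<noteq> y" using E[OF e] by (auto simp: card_2_iff)
    have sub: "e \<subseteq> P1 \<union> P2 \<union> P3" using E[OF e] by auto
    consider (W) "e \<inter> P3 \<noteq> {}" | (UU) "e \<subseteq> P1" | (VV) "e \<subseteq> P2" | (UV) "\<exists>u\<in>P1. \<exists>w\<in>P2. e = {u,w}"
      using sub xy by blast
    thus ?thesis
    proof cases
      case W
      then obtain z where z: "z \<in> e" "z \<in> P3" by blast
      have "\<not> e \<subseteq> P1" "\<not> e \<subseteq> P2" "\<not> (\<exists>u\<in>P1. \<exists>w\<in>P2. e = {u,w})" using z d13 d23 by blast+
      thus ?thesis using W by simp
    next
      case UU
      have "e \<inter> P3 = {}" "\<not> e \<subseteq> P2" "\<not> (\<exists>u\<in>P1. \<exists>w\<in>P2. e = {u,w})" using UU d12 d13 xy by auto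
      thus ?thesis using UU by simp
    next
      case VV
      have "e \<inter> P3 = {}" "\<not> e \<subseteq> P1" "\<not> (\<exists>u\<in>P1. \<exists>w\<in>P2. e = {u,w})" using VV d12 d23 xy by auto
      thus ?thesis using VV by simp
    next
      case UV
      then obtain u w where uw: "u \<in> P1" "w \<in> P2" "e = {u,w}" by blast
      have "e \<inter> P3 = {}" "\<not> e \<subseteq> P1" "\<not> e \<subseteq> P2" using uw d12 d13 d23 by auto
      thus ?thesis using UV by simp
    qed
  qed
  have "real (card E) = (\<Sum>e\<in>E. (1::real))" by simp
  also have "\<dots> = (\<Sum>e\<in>E. (if e \<subseteq> P1 then 1 else 0) + (if e \<subseteq> P2 then 1 else 0)
     + (if \<exists>u\<in>P1. \<exists>w\<in>P2. e = {u,w} then 1 else 0) + (if e \<inter> P3 \<noteq> {} then (1::real) else 0))"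
    by (rule sum.cong[OF refl pt])
  also have "\<dots> = (\<Sum>e\<in>E. (if e \<subseteq> P1 then 1 else 0)) + (\<Sum>e\<in>E. (if e \<subseteq> P2 then 1 else 0))
     + (\<Sum>e\<in>E. (if \<exists>u\<in>P1. \<exists>w\<in>P2. e = {u,w} then 1 else 0)) + (\<Sum>e\<in>E. (if e \<inter> P3 \<noteq> {} then (1::real) else 0))"
    by (simp only: sum.distrib)
  also have "\<dots> = real (card {e\<in>E. e \<subseteq> P1}) + real (card {e\<in>E. e \<subseteq> P2}) + real (e_cross E P1 P2)
     + real (card {e\<in>E. e \<inter> P3 \<noteq> {}})"
    unfolding e_cross_def card_filter_sum[OF finE] ..
  finally show ?thesis by linarith
qed

lemma cross_bounds:
  assumes finE: "finite E"
  shows "e_cross E P1 P2 \<le> e_cross E P1 (P2 \<union> P3)"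
    and "e_cross E P1 (P2 \<union> P3) \<le> e_cross E P1 P2 + card {e\<in>E. e \<inter> P3 \<noteq> {}}"
proof -
  show "e_cross E P1 P2 \<le> e_cross E P1 (P2 \<union> P3)" unfolding e_cross_def
    using finE by (intro card_mono) auto
  have "{e \<in> E. \<exists>u\<in>P1. \<exists>w\<in>P2 \<union> P3. e = {u, w}} \<subseteq> {e \<in> E. \<exists>u\<in>P1. \<exists>w\<in>P2. e = {u, w}} \<union> {e\<in>E. e \<inter> P3 \<noteq> {}}"
    by auto
  hence "e_cross E P1 (P2 \<union> P3) \<le> card ({e \<in> E. \<exists>u\<in>P1. \<exists>w\<in>P2. e = {u, w}} \<union> {e\<in>E. e \<inter> P3 \<noteq> {}})"
    unfolding e_cross_def using finE by (intro card_mono) auto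
  also have "\<dots> \<le> e_cross E P1 P2 + card {e\<in>E. e \<inter> P3 \<noteq> {}}" unfolding e_cross_def by (rule card_Un_le)
  finally show "e_cross E P1 (P2 \<union> P3) \<le> e_cross E P1 P2 + card {e\<in>E. e \<inter> P3 \<noteq> {}}" .
qed

lemma cross_le: assumes "finite A" "finite B" shows "e_cross E A B \<le> card A * card B"
proof -
  have "e_cross E A B \<le> card (TX A B)" unfolding e_cross_def TX_def
    using finite_TX[OF assms] unfolding TX_def by (intro card_mono) auto
  also have "\<dots> \<le> card (A \<times> B)" unfolding TX_eq using assms by (intro card_image_le) auto
  also have "\<dots> = card A * card B" by (rule card_cartesian_product)
  finally show ?thesis .
qed

lemma e_cross_TX: "e_cross E A B = card (E \<inter> TX A B)"
  unfolding e_cross_def TX_filter ..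

lemma e_cross_sym: "e_cross E A B = e_cross E B A"
  unfolding e_cross_TX using TX_sym[of A B] by simp

lemma touch_le:
  assumes finS: "finite S" and E: "\<And>g. g \<in> E \<Longrightarrow> g \<subseteq> S \<and> card g = 2" and R: "R \<subseteq> S"
  shows "card {g\<in>E. g \<inter> R \<noteq> {}} \<le> card R * card S"
proof -
  have "{g\<in>E. g \<inter> R \<noteq> {}} \<subseteq> (\<lambda>(r,y). {r,y}) ` (R \<times> S)"
  proof
    fix g assume g: "g \<in> {g\<in>E. g \<inter> R \<noteq> {}}"
    have "card g = 2" using E g by auto
    then obtain x y where xy: "g = {x,y}" by (meson card_2_iff)
    have "x \<in> S" "y \<in> S" using E g xy by auto
    moreover have "x \<in> R \<or> y \<in> R" using g xy by auto
    ultimately show "g \<in> (\<lambda>(r,y). {r,y}) ` (R \<times> S)" using xy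
      by (auto simp: image_iff insert_commute intro: bexI[of _ "(x,y)"] bexI[of _ "(y,x)"])
  qed
  hence "card {g\<in>E. g \<inter> R \<noteq> {}} \<le> card ((\<lambda>(r,y). {r,y}) ` (R \<times> S))"
    using finS R by (intro card_mono) (auto intro: finite_subset)
  also have "\<dots> \<le> card (R \<times> S)" by (rule card_image_le) (use finS R in \<open>auto intro: finite_subset\<close>)
  finally show ?thesis by (simp add: card_cartesian_product)
qed

lemma piece3:
  assumes "finite U1" "finite U2" "finite U3" "finite Q1" "finite Q2" "finite Q3"
    and "U1 \<inter> U2 = {}" "U1 \<inter> U3 = {}" "U2 \<inter> U3 = {}"
    and "Q1 \<inter> Q2 = {}" "Q1 \<inter> Q3 = {}" "Q2 \<inter> Q3 = {}"
    and "card U1 = card Q1" "card U2 = card Q2" "card U3 = card Q3"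
  shows "\<exists>\<sigma>::'a\<Rightarrow>'b. inj_on \<sigma> (U1 \<union> U2 \<union> U3) \<and> \<sigma> ` U1 = Q1 \<and> \<sigma> ` U2 = Q2 \<and> \<sigma> ` U3 = Q3"
proof -
  obtain h1 where h1: "bij_betw h1 U1 Q1" using finite_same_card_bij[OF assms(1) assms(4) assms(13)] by blast
  obtain h2 where h2: "bij_betw h2 U2 Q2" using finite_same_card_bij[OF assms(2) assms(5) assms(14)] by blast
  obtain h3 where h3: "bij_betw h3 U3 Q3" using finite_same_card_bij[OF assms(3) assms(6) assms(15)] by blast
  define \<sigma> where "\<sigma> x = (if x \<in> U1 then h1 x else if x \<in> U2 then h2 x else h3 x)" for x
  have b1: "bij_betw \<sigma> U1 Q1" using h1 by (rule bij_betw_cong[THEN iffD1, rotated]) (simp add: \<sigma>_def)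
  have b2: "bij_betw \<sigma> U2 Q2" using h2 assms(7) by (intro bij_betw_cong[THEN iffD1, OF _ h2]) (auto simp: \<sigma>_def)
  have b3: "bij_betw \<sigma> U3 Q3" using h3 assms(8,9) by (intro bij_betw_cong[THEN iffD1, OF _ h3]) (auto simp: \<sigma>_def)
  have "bij_betw \<sigma> (U1 \<union> U2 \<union> U3) (Q1 \<union> Q2 \<union> Q3)"
    using assms(10-12) by (intro bij_betw_combine b1 b2 b3) auto
  thus ?thesis using b1 b2 b3 unfolding bij_betw_def by blast
qed

lemma min_deg:
  assumes finV: "finite V" and Vne: "V \<noteq> {}" and finE: "finite E" and E2: "\<And>e. e \<in> E \<Longrightarrow> card e = 2"
  shows "\<exists>w\<in>V. card {e\<in>E. w \<in> e} * card V \<le> 2 * card E"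
proof -
  define deg where "deg v = card {e\<in>E. v \<in> e}" for v
  have "(\<Sum>v\<in>V. deg v) = (\<Sum>v\<in>V. \<Sum>e\<in>E. if v \<in> e then 1 else 0)"
    unfolding deg_def using finE by (simp add: sum.inter_filter[symmetric])
  also have "\<dots> = (\<Sum>e\<in>E. \<Sum>v\<in>V. if v \<in> e then 1 else 0)" by (rule sum.swap)
  also have "\<dots> = (\<Sum>e\<in>E. card (V \<inter> e))"
    using finV by (simp add: sum.inter_filter[symmetric] Int_def)
  also have "\<dots> \<le> (\<Sum>e\<in>E. 2)"
  proof (rule sum_mono)
    fix e assume "e \<in> E"
    hence "finite e" "card e = 2" using E2 card.infinite by fastforce+
    thus "card (V \<inter> e) \<le> 2" by (metis card_mono inf_le2)
  qed
  finally have S: "(\<Sum>v\<in>V. deg v) \<le> 2 * card E" by simp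
  have "Min (deg ` V) \<in> deg ` V" using finV Vne by (intro Min_in) auto
  then obtain w where w: "w \<in> V" "deg w = Min (deg ` V)" by auto
  have "card V * deg w \<le> (\<Sum>v\<in>V. deg v)"
    using sum_bounded_below[of V "deg w" deg] w finV by (simp add: Min_le)
  thus ?thesis using w S unfolding deg_def by (intro bexI[of _ w]) (auto simp: mult.commute)
qed

lemma avg_bound:
  fixes v :: "'a \<Rightarrow> real"
  assumes "finite P" "P \<noteq> {}" "\<And>\<pi>. \<pi> \<in> P \<Longrightarrow> \<bar>v \<pi> - c\<bar> < d"
  shows "\<bar>(\<Sum>\<pi>\<in>P. v \<pi>) / real (card P) - c\<bar> < d"
proof -
  have cp: "real (card P) > 0" using assms by (simp add: card_gt_0_iff)
  have "(\<Sum>\<pi>\<in>P. v \<pi>) / real (card P) - c = (\<Sum>\<pi>\<in>P. v \<pi> - c) / real (card P)"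
    using cp by (simp add: sum_subtractf field_simps)
  moreover have "\<bar>\<Sum>\<pi>\<in>P. v \<pi> - c\<bar> < real (card P) * d"
  proof -
    have "\<bar>\<Sum>\<pi>\<in>P. v \<pi> - c\<bar> \<le> (\<Sum>\<pi>\<in>P. \<bar>v \<pi> - c\<bar>)" by (rule sum_abs)
    also have "\<dots> < (\<Sum>\<pi>\<in>P. d)" using assms by (intro sum_strict_mono) auto
    finally show ?thesis by simp
  qed
  ultimately have "\<bar>(\<Sum>\<pi>\<in>P. v \<pi>) / real (card P) - c\<bar> = \<bar>\<Sum>\<pi>\<in>P. v \<pi> - c\<bar> / real (card P)"
    and lt: "\<bar>\<Sum>\<pi>\<in>P. v \<pi> - c\<bar> < real (card P) * d" using cp by (simp_all add: abs_divide)
  moreover have "\<bar>\<Sum>\<pi>\<in>P. v \<pi> - c\<bar> / real (card P) < d" using lt cp by (simp add: pos_divide_less_eq mult.commute)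
  ultimately show ?thesis by simp
qed

lemma helper_div2: "(K::real) > 0 \<Longrightarrow> a*(K*b/N)/K = a*b/N"
  by (simp add: field_simps)

lemma fam_S:
  fixes \<sigma> :: "'a \<Rightarrow> 'b"
  assumes finS: "finite S" and inj: "inj_on \<sigma> VF" and img: "\<sigma> ` VF \<subseteq> S"
    and finE: "finite EF" and EF: "\<And>e. e \<in> EF \<Longrightarrow> e \<subseteq> VF \<and> card e = 2"
    and EG: "\<And>g. g \<in> EG \<Longrightarrow> g \<subseteq> S \<and> card g = 2" and n2: "card S \<ge> 2"
  shows "(\<Sum>\<pi>\<in>Hgrp S S {}. real (card ((\<lambda>e. (\<pi> \<circ> \<sigma>) ` e) ` EF \<inter> EG))) / real (card (Hgrp S S {}))
     = real (card EF) * real (card EG) / (real (card S) * (real (card S) - 1) / 2)"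
proof -
  define P where "P = Hgrp S S {}"
  define cnt where "cnt f = card {\<pi>\<in>P. \<pi> ` f \<in> EG}" for f
  define N where "N = real (card S) * (real (card S) - 1) / 2"
  have finP: "finite P" unfolding P_def using Hgrp_finite[OF finS] .
  have PneR: "real (card P) > 0" using finP Hgrp_id[of S S "{}"] unfolding P_def by (auto simp: card_gt_0_iff)
  have Npos: "N > 0" unfolding N_def using n2 by auto
  have cT: "real (card (T2 S)) = N" unfolding N_def using card_T2[OF finS] real_choose2 by simp
  have inj\<pi>: "\<And>\<pi>. \<pi> \<in> P \<Longrightarrow> inj \<pi>" unfolding P_def using Hgrp_inj by blast
  have S1: "(\<Sum>\<pi>\<in>P. card ((\<lambda>e. (\<pi> \<circ> \<sigma>) ` e) ` EF \<inter> EG)) = (\<Sum>e\<in>EF. cnt (\<sigma> ` e))"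
    unfolding cnt_def by (rule sum_copies[OF finP inj\<pi> finE _ inj]) (use EF in auto)
  have GT: "EG \<inter> T2 S = EG" using EG unfolding T2_def by auto
  have pt: "real (cnt (\<sigma> ` e)) = real (card P) * real (card EG) / N" if e: "e \<in> EF" for e
  proof -
    have eV: "e \<subseteq> VF" and e2: "card e = 2" using EF[OF e] by auto
    have "card (\<sigma> ` e) = card e" using inj_on_subset[OF inj eV] by (rule card_image)
    moreover have "\<sigma> ` e \<subseteq> S" using eV img by blast
    ultimately have fT: "\<sigma> ` e \<in> T2 S" unfolding T2_def using e2 by simp
    have o: "card (T2 S) * cnt (\<sigma> ` e) = card P * card EG"
      using orbit_H_T2[OF finS order_refl empty_subsetI Int_empty_right fT, of EG] unfolding cnt_def P_def GT .
    have "real (card (T2 S)) * real (cnt (\<sigma> ` e)) = real (card P) * real (card EG)"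
      unfolding of_nat_mult[symmetric] o ..
    thus ?thesis unfolding cT using Npos by (metis nonzero_mult_div_cancel_left less_irrefl)
  qed
  have "(\<Sum>\<pi>\<in>P. real (card ((\<lambda>e. (\<pi> \<circ> \<sigma>) ` e) ` EF \<inter> EG))) = real (\<Sum>\<pi>\<in>P. card ((\<lambda>e. (\<pi> \<circ> \<sigma>) ` e) ` EF \<inter> EG))"
    by (simp only: of_nat_sum)
  also have "\<dots> = (\<Sum>e\<in>EF. real (cnt (\<sigma> ` e)))" unfolding S1 by (simp only: of_nat_sum)
  also have "\<dots> = (\<Sum>e\<in>EF. real (card P) * real (card EG) / N)" by (rule sum.cong[OF refl pt])
  also have "\<dots> = real (card EF) * (real (card P) * real (card EG) / N)" by simp
  finally have X: "(\<Sum>\<pi>\<in>P. real (card ((\<lambda>e. (\<pi> \<circ> \<sigma>) ` e) ` EF \<inter> EG))) = real (card EF) * (real (card P) * real (card EG) / N)" .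
  show ?thesis unfolding P_def[symmetric] N_def[symmetric] X using PneR by (rule helper_div2)
qed



lemma copy_ok:
  assumes "\<pi> permutes {0..<n}" "inj_on \<sigma> VF" "\<sigma> ` VF = {0..<n}"
  shows "is_copy_in_Kn n VF EF ((\<lambda>e. (\<pi> \<circ> \<sigma>) ` e) ` EF)"
proof -
  have "inj_on (\<pi> \<circ> \<sigma>) VF" using assms(2) permutes_inj[OF assms(1)] by (simp add: comp_inj_on inj_on_subset)
  moreover have "(\<pi> \<circ> \<sigma>) ` VF \<subseteq> {0..<n}"
  proof -
    have "(\<pi> \<circ> \<sigma>) ` VF = \<pi> ` (\<sigma> ` VF)" by (simp only: image_comp)
    thus ?thesis using assms(3) permutes_image[OF assms(1)] by simp
  qed
  ultimately show ?thesis unfolding is_copy_in_Kn_def by blast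
qed

lemma helper_avg2: "\<bar>x - c\<bar> < (d::real) \<Longrightarrow> \<bar>y - c\<bar> < d \<Longrightarrow> \<bar>(x + y)/2 - c\<bar> < d"
  by (simp add: abs_less_iff) argo

lemma main_thm:
  fixes n :: nat and VF :: "nat set" and EF :: "nat set set" and t :: real and U V :: "nat set"
    and \<gamma> :: real and EG :: "nat set set" and X Y :: "nat set"
  assumes nbig: "n \<ge> 1000" and gF: "graph_on VF EF" and cVF: "card VF = n" and t1: "t \<ge> 1"
    and UV: "U \<union> V = VF" and dUV: "U \<inter> V = {}" and cU: "card U = n div 2"
    and Fdev: "\<bar>real (e_cross EF U V) - real (card EF) / 2\<bar> \<ge> t"
    and g0: "0 < \<gamma>" and g1: "\<gamma> < 1" and gG: "graph_on {0..<n} EG"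
    and XY: "X \<union> Y = {0..<n}" and dXY: "X \<inter> Y = {}" and cX: "card X = n div 2"
    and Gdev: "\<bar>real (e_cross EG X Y) - real (card X) * real (card Y) / 2\<bar> \<ge> \<gamma> * real n ^ 2"
    and gt: "\<gamma> * t \<ge> 10 * real (card EF) / real n"
  shows "\<exists>F0. is_copy_in_Kn n VF EF F0 \<and> \<bar>real (card (F0 \<inter> EG)) - real (card EF) / 2\<bar> \<ge> \<gamma> * t / 2"
proof (rule ccontr)
  assume neg: "\<not> ?thesis"
  have allc: "\<bar>real (card (F0 \<inter> EG)) - real (card EF) / 2\<bar> < \<gamma> * t / 2" if "is_copy_in_Kn n VF EF F0" for F0
  proof -
    have "\<not> (\<gamma> * t / 2 \<le> \<bar>real (card (F0 \<inter> EG)) - real (card EF) / 2\<bar>)" using neg that by blast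
    thus ?thesis by simp
  qed
  define m where "m = n div 2"
  define S where "S = {0..<n}"
  have finVF: "finite VF" using gF unfolding graph_on_def by auto
  have EFs: "\<And>e. e \<in> EF \<Longrightarrow> e \<subseteq> VF \<and> card e = 2" using gF unfolding graph_on_def by auto
  have finEF: "finite EF" using finVF EFs by (intro finite_subset[of EF "Pow VF"]) auto
  have finS: "finite S" unfolding S_def by simp
  have cS: "card S = n" unfolding S_def by simp
  have EGs: "\<And>g. g \<in> EG \<Longrightarrow> g \<subseteq> S \<and> card g = 2" using gG unfolding graph_on_def S_def by auto
  have finEG: "finite EG" using finS EGs by (intro finite_subset[of EG "Pow S"]) auto
  have finU: "finite U" and finV: "finite V" using finVF UV by auto
  have finX: "finite X" and finY: "finite Y" using XY by (auto intro: finite_subset[of _ "{0..<n}"])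
  have cV: "card V = n - m" using card_Un_disjoint[OF finU finV dUV] UV cVF cU unfolding m_def by simp
  have cY: "card Y = n - m" using card_Un_disjoint[OF finX finY dXY] XY cX unfolding m_def by simp
  have cX': "card X = m" and cU': "card U = m" using cX cU unfolding m_def by auto
  have nm: "n = 2*m \<or> n = 2*m+1" unfolding m_def by auto
  have m500: "m \<ge> 500" using nbig unfolding m_def by auto
  have "\<exists>B R W. B \<union> R = Y \<and> B \<inter> R = {} \<and> card B = m \<and> W \<subseteq> V \<and> card W = card R \<and>
      real (card {e\<in>EF. e \<inter> W \<noteq> {}}) * real m \<le> 2 * real (card EF)"
  proof (cases "n = 2*m")
    case True
    hence "card Y = m" using cY by simp
    thus ?thesis by (intro exI[of _ Y] exI[of _ "{}"]) auto
  next
    case False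
    hence n1: "n = 2*m+1" using nm by auto
    hence cY1: "card Y = m+1" and cV1: "card V = m+1" using cY cV by auto
    obtain z where z: "z \<in> Y" using cY1 by fastforce
    have Vne: "V \<noteq> {}" using cV1 by auto
    have "\<exists>w\<in>V. card {e\<in>EF. w \<in> e} * card V \<le> 2 * card EF"
      by (rule min_deg[OF finV Vne finEF]) (use EFs in blast)
    then obtain w where w: "w \<in> V" "card {e\<in>EF. w \<in> e} * card V \<le> 2 * card EF" by blast
    have eqW: "{e\<in>EF. e \<inter> {w} \<noteq> {}} = {e\<in>EF. w \<in> e}" by auto
    have "real (card {e\<in>EF. w \<in> e}) * real m \<le> real (card {e\<in>EF. w \<in> e}) * real (card V)"
      using cV1 by (intro mult_left_mono) auto
    also have "\<dots> \<le> 2 * real (card EF)" using w(2) by (metis of_nat_le_iff of_nat_mult of_nat_numeral)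
    finally have d: "real (card {e\<in>EF. e \<inter> {w} \<noteq> {}}) * real m \<le> 2 * real (card EF)" unfolding eqW .
    have "card (Y - {z}) = m" using cY1 z finY by simp
    thus ?thesis using z w d by (intro exI[of _ "Y - {z}"] exI[of _ "{z}"] exI[of _ "{w}"]) auto
  qed
  then obtain B R W where BR: "B \<union> R = Y" "B \<inter> R = {}" and cB: "card B = m" and WV: "W \<subseteq> V"
    and cW: "card W = card R" and jFm: "real (card {e\<in>EF. e \<inter> W \<noteq> {}}) * real m \<le> 2 * real (card EF)"
    by blast
  define V' where "V' = V - W"
  have finB: "finite B" and finR: "finite R" using BR finY by auto
  have finW: "finite W" and finV': "finite V'" using WV finV unfolding V'_def by (auto intro: finite_subset)
  have cR: "card R = n - m - m" using card_Un_disjoint[OF finB finR BR(2)] BR cY cB by simp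
  have cV': "card V' = m" unfolding V'_def using card_Diff_subset[OF finW WV] cV cW cR nm by auto
  have VFeq: "VF = U \<union> V' \<union> W" using UV WV unfolding V'_def by auto
  have Seq: "S = X \<union> B \<union> R" using XY BR unfolding S_def by auto
  have d1: "U \<inter> V' = {}" "U \<inter> W = {}" "V' \<inter> W = {}" using dUV WV unfolding V'_def by auto
  have d2: "X \<inter> B = {}" "X \<inter> R = {}" "B \<inter> R = {}" using dXY BR by auto
  obtain \<sigma>0 where s0: "inj_on \<sigma>0 (U \<union> V' \<union> W)" "\<sigma>0 ` U = X" "\<sigma>0 ` V' = B" "\<sigma>0 ` W = R"
    using piece3[OF finU finV' finW finX finB finR d1 d2] cU' cX' cV' cB cW by auto
  obtain \<sigma>1 where s1: "inj_on \<sigma>1 (U \<union> V' \<union> W)" "\<sigma>1 ` U = B" "\<sigma>1 ` V' = X" "\<sigma>1 ` W = R"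
    using piece3[OF finU finV' finW finB finX finR d1] d2 cU' cX' cV' cB cW by (auto simp: Int_commute)
  have s0i: "inj_on \<sigma>0 VF" and s0S: "\<sigma>0 ` VF = S" using s0 VFeq Seq by (auto simp: image_Un)
  have s1i: "inj_on \<sigma>1 VF" and s1S: "\<sigma>1 ` VF = S" using s1 VFeq Seq by (auto simp: image_Un)
  have XS: "X \<subseteq> S" and BS: "B \<subseteq> S" using Seq by auto
    have famb: "\<bar>(\<Sum>\<pi>\<in>Hgrp S A' B'. real (card ((\<lambda>e. (\<pi> \<circ> \<sigma>) ` e) ` EF \<inter> EG))) / real (card (Hgrp S A' B')) - real (card EF) / 2\<bar> < \<gamma> * t / 2"
    if "inj_on \<sigma> VF" "\<sigma> ` VF = S" for \<sigma> A' B'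
  proof (rule avg_bound[OF Hgrp_finite[OF finS]])
    show "Hgrp S A' B' \<noteq> {}" using Hgrp_id by blast
    fix \<pi> assume "\<pi> \<in> Hgrp S A' B'"
    hence "\<pi> permutes {0..<n}" unfolding Hgrp_def S_def by auto
    thus "\<bar>real (card ((\<lambda>e. (\<pi> \<circ> \<sigma>) ` e) ` EF \<inter> EG)) - real (card EF) / 2\<bar> < \<gamma> * t / 2"
      using allc copy_ok that unfolding S_def by blast
  qed
  let ?e = "real (card EF)"
  let ?\<alpha> = "real (card {e\<in>EF. e \<subseteq> U})"
  let ?\<beta> = "real (card {e\<in>EF. e \<subseteq> V'})"
  let ?a = "real (e_cross EF U V')"
  let ?jF = "real (card {e\<in>EF. e \<inter> W \<noteq> {}})"
  let ?aUV = "real (e_cross EF U V)"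
  let ?gA = "real (card {g\<in>EG. g \<subseteq> X})"
  let ?gB = "real (card {g\<in>EG. g \<subseteq> B})"
  let ?gAB = "real (e_cross EG X B)"
  let ?jG = "real (card {g\<in>EG. g \<inter> R \<noteq> {}})"
  let ?gXY = "real (e_cross EG X Y)"
  let ?eG = "real (card EG)"
  have m2: "m \<ge> 2" using m500 by simp
  have EG2: "\<forall>g\<in>EG. card g = 2" using EGs by auto
  have nbigR: "real n \<ge> 1000" using nbig by simp
  have nmR: "real n = 2 * real m \<or> real n = 2 * real m + 1" using nm by auto
  have pG: "card EG = card {g\<in>EG. g \<subseteq> X} + card {g\<in>EG. g \<subseteq> B} + e_cross EG X B + card {g\<in>EG. g \<inter> R \<noteq> {}}"
    by (rule part_count[OF finEG _ d2]) (use EGs Seq in blast)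
  hence eGdef: "?eG = ?gA + ?gB + ?gAB + ?jG" by simp
  have jG0: "0 \<le> ?jG" by simp
  have cR1: "card R \<le> 1" using cR nm by auto
  have RS: "R \<subseteq> S" using Seq by auto
  have "card {g\<in>EG. g \<inter> R \<noteq> {}} \<le> card R * card S" by (rule touch_le[OF finS EGs RS])
  also have "\<dots> \<le> n" using cR1 cS by simp
  finally have jGn: "?jG \<le> real n" by simp
  have BRY: "B \<union> R = Y" using BR by simp
  have gXY1: "?gAB \<le> ?gXY" using cross_bounds(1)[OF finEG, of X B R] BRY by simp
  have gXY2: "?gXY \<le> ?gAB + ?jG" using cross_bounds(2)[OF finEG, of X B R] BRY by simp
  have gXY3: "0 \<le> ?gXY" by simp
  have mn: "m \<le> n" using nm by auto
  have cYR: "real (card Y) = real n - real m" using cY mn by simp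
  have "e_cross EG X Y \<le> card X * card Y" by (rule cross_le[OF finX finY])
  hence gXY4: "?gXY \<le> real m * (real n - real m)" using cX' cYR
    by (metis of_nat_le_iff of_nat_mult)
  have gdev: "\<bar>?gXY - real m * (real n - real m) / 2\<bar> \<ge> \<gamma> * real n ^ 2" using Gdev cX' cYR by simp
  have pF: "card EF = card {e\<in>EF. e \<subseteq> U} + card {e\<in>EF. e \<subseteq> V'} + e_cross EF U V' + card {e\<in>EF. e \<inter> W \<noteq> {}}"
    by (rule part_count[OF finEF _ d1]) (use EFs VFeq in blast)
  hence edef: "?e = ?\<alpha> + ?\<beta> + ?a + ?jF" by simp
  have ge0: "?\<alpha> \<ge> 0" "?\<beta> \<ge> 0" "?a \<ge> 0" "?jF \<ge> 0" by simp_all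
  have V'W: "V' \<union> W = V" using WV unfolding V'_def by auto
  have a0a1: "?a \<le> ?aUV" using cross_bounds(1)[OF finEF, of U V' W] V'W by simp
  have a0a2: "?aUV \<le> ?a + ?jF" using cross_bounds(2)[OF finEF, of U V' W] V'W by simp
    have n2: "card S \<ge> 2" using cS nbig by simp
  have hS: "\<bar>?e * ?eG / (real (card S) * (real (card S) - 1) / 2) - ?e / 2\<bar> < \<gamma> * t / 2"
    using famb[OF s0i s0S, of S "{}"] fam_S[OF finS s0i _ finEF EFs EGs n2] s0S by simp
  hence hA: "\<bar>?e * ?eG / (real n * (real n - 1) / 2) - ?e / 2\<bar> < \<gamma> * t / 2" using cS by simp
  obtain JB where JB: "0 \<le> JB" "JB \<le> ?jF" and JBeq:
    "(\<Sum>\<pi>\<in>Hgrp S X B. real (card ((\<lambda>e. (\<pi> \<circ> \<sigma>0) ` e) ` EF \<inter> EG))) / real (card (Hgrp S X B))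
     = ?\<alpha> * ?gA / (real m * (real m - 1) / 2) + ?\<beta> * ?gB / (real m * (real m - 1) / 2) + ?a * ?gAB / (real m)^2 + JB"
    using fam_H[OF finS XS BS d2(1) cX' cB m2 s0i s0(2) s0(3) VFeq d1 finEF EFs EG2] by blast
  have dBX: "B \<inter> X = {}" using d2 by auto
  obtain JC where JC: "0 \<le> JC" "JC \<le> ?jF" and JCeq:
    "(\<Sum>\<pi>\<in>Hgrp S B X. real (card ((\<lambda>e. (\<pi> \<circ> \<sigma>1) ` e) ` EF \<inter> EG))) / real (card (Hgrp S B X))
     = ?\<alpha> * ?gB / (real m * (real m - 1) / 2) + ?\<beta> * ?gA / (real m * (real m - 1) / 2) + ?a * real (e_cross EG B X) / (real m)^2 + JC"
    using fam_H[OF finS BS XS dBX cB cX' m2 s1i s1(2) s1(3) VFeq d1 finEF EFs EG2] by blast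
  have hB: "\<bar>(?\<alpha> * ?gA / (real m * (real m - 1) / 2) + ?\<beta> * ?gB / (real m * (real m - 1) / 2) + ?a * ?gAB / (real m)^2 + JB) - ?e / 2\<bar> < \<gamma> * t / 2"
    using famb[OF s0i s0S, of X B] unfolding JBeq .
  have hC: "\<bar>(?\<alpha> * ?gB / (real m * (real m - 1) / 2) + ?\<beta> * ?gA / (real m * (real m - 1) / 2) + ?a * ?gAB / (real m)^2 + JC) - ?e / 2\<bar> < \<gamma> * t / 2"
    using famb[OF s1i s1S, of B X] unfolding JCeq e_cross_sym[of EG B X] .
  have hBC: "\<bar>((?\<alpha> * ?gA / (real m * (real m - 1) / 2) + ?\<beta> * ?gB / (real m * (real m - 1) / 2) + ?a * ?gAB / (real m)^2 + JB)
      + (?\<alpha> * ?gB / (real m * (real m - 1) / 2) + ?\<beta> * ?gA / (real m * (real m - 1) / 2) + ?a * ?gAB / (real m)^2 + JC))/2 - ?e / 2\<bar> < \<gamma> * t / 2"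
    by (rule helper_avg2[OF hB hC])
  show False
    by (rule arith_core[OF nbigR nmR eGdef jG0 jGn gXY1 gXY2 gXY3 gXY4 gdev edef ge0 jFm Fdev a0a1 a0a2 t1 g0 g1 gt hA JB JC hBC])
qed


theorem lemma2p1:
  shows "\<exists>n0::nat. \<forall>n\<ge>n0.
    \<forall>(VF::nat set) (EF::nat set set) (t::real) U V (\<gamma>::real) (EG::nat set set) X Y.
      graph_on VF EF \<and> card VF = n \<and> t \<ge> 1 \<and>
      U \<union> V = VF \<and> U \<inter> V = {} \<and> card U = n div 2 \<and>
      \<bar>real (e_cross EF U V) - real (card EF) / 2\<bar> \<ge> t \<and>
      0 < \<gamma> \<and> \<gamma> < 1 \<and>
      graph_on {0..<n} EG \<and>
      X \<union> Y = {0..<n} \<and> X \<inter> Y = {} \<and> card X = n div 2 \<and>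
      \<bar>real (e_cross EG X Y) - real (card X) * real (card Y) / 2\<bar> \<ge> \<gamma> * real n ^ 2 \<and>
      \<gamma> * t \<ge> 10 * real (card EF) / real n
      \<longrightarrow> (\<exists>F0. is_copy_in_Kn n VF EF F0 \<and>
             \<bar>real (card (F0 \<inter> EG)) - real (card EF) / 2\<bar> \<ge> \<gamma> * t / 2)"
    apply (rule exI[of _ "1000::nat"])
  apply (intro allI impI)
  apply (elim conjE)
  apply (rule main_thm)
                 apply assumption+
  done

end
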